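(* Let $c$ be a correct client following the client protocol described in the context, let $r$ be a \textsc{get} operation and $w$ a \textsc{put} operation issued by $c$, with $r$ issued before $w$. Then $\mathrm{ts}(w) > \mathrm{ts}(r)$.
   Context: Client model. A client $c$ has a physical clock whose reading $\mathsf{clock}_c$ is a positive real number that is strictly increasing in real time. The client keeps two variables, a dependency time $\mathsf{dt}_c$ and a common global stable time $\mathsf{cgst}_c$, both initially $0$; they are modified only as described below. A correct client issues its operations one at a time: an operation is issued only after the previous one has returned. Servers are grouped into partitions of $3f+1$ replicas each, and a quorum is a set of $2f+1$ replicas of one partition. \textsc{get}$(k)$: the client sets $ts \gets \max\{\mathsf{dt}_c, \mathsf{cgst}_c\}$ and sends a request carrying $ts$ to the replicas of the partition holding $k$. It then waits for replies from a quorum $Q$, each reply from replica $i\in Q$ carrying a value $v_i$ and a number $cgst_i$, sets $\mathsf{cgst}_c \gets \max\{\mathsf{cgst}_c, \min_{i\in Q} cgst_i\}$, and returns a value. \textsc{put}$(k,v)$: the client waits until $\mathsf{clock}_c > \mathsf{cgst}_c$, then sends a request carrying $(k, v, cl, c)$, where $cl$ is the current reading of $\mathsf{clock}_c$, to the replicas of the partition holding $k$. It then waits for replies from a quorum $Q$, each reply from $i\in Q$ carrying a number $cgst_i$, sets $\mathsf{cgst}_c \gets \max\{\mathsf{cgst}_c, \min_{i\in Q} cgst_i\}$, then sets $\mathsf{dt}_c$ to the current reading of $\mathsf{clock}_c$, and returns. Timestamps: for a \textsc{get} operation $o$, $\mathrm{ts}(o)$ is the value $ts=\max\{\mathsf{dt}_c,\mathsf{cgst}_c\}$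 computed when $o$ is issued; for a \textsc{put} operation $o$, $\mathrm{ts}(o)$ is the clock value $cl$ sent in its request. *)

theory Defs
  imports Complex_Main
begin

text \<open>
Real time is modelled by the reals; the physical
clock of the client is a function from real time to clock readings.
Each operation of the run is described by the nondeterministic choices made by
the environment:
  GetOp k t tr m     : get of key k, issued (request sent) at real time t,
                       replies from the quorum received and value returned at
                       time tr; m is the minimum of the cgst_i carried by the
                       quorum replies.
  PutOp k v t s m tr : put of (k,v), issued at real time t, request sent at
                       time s (after waiting), m is the minimum of the cgst_i
                       carried by the quorum replies, and tr is the real time at
                       which dt is set to the clock reading (just before return).
The client state is the pair (dt, cgst).
\<close>

datatype ('k, 'v) cop =
    GetOp 'k real real real
  | PutOp 'k 'v real real real real

fun issue_time :: "('k, 'v) cop \<Rightarrow> real" where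
  "issue_time (GetOp k t tr m) = t"
| "issue_time (PutOp k v t s m tr) = t"

fun return_time :: "('k, 'v) cop \<Rightarrow> real" where
  "return_time (GetOp k t tr m) = tr"
| "return_time (PutOp k v t s m tr) = tr"

fun is_get :: "('k, 'v) cop \<Rightarrow> bool" where
  "is_get (GetOp k t tr m) = True"
| "is_get (PutOp k v t s m tr) = False"

fun is_put :: "('k, 'v) cop \<Rightarrow> bool" where
  "is_put (GetOp k t tr m) = False"
| "is_put (PutOp k v t s m tr) = True"

fun exec_op :: "(real \<Rightarrow> real) \<Rightarrow> real \<times> real \<Rightarrow> ('k, 'v) cop \<Rightarrow> real \<times> real" where
  "exec_op clk (dt, cg) (GetOp k t tr m) = (dt, max cg m)"
| "exec_op clk (dt, cg) (PutOp k v t s m tr) = (clk tr, max cg m)"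

fun op_ok :: "(real \<Rightarrow> real) \<Rightarrow> real \<times> real \<Rightarrow> ('k, 'v) cop \<Rightarrow> bool" where
  "op_ok clk (dt, cg) (GetOp k t tr m) = (t < tr)"
| "op_ok clk (dt, cg) (PutOp k v t s m tr) = (t \<le> s \<and> s < tr \<and> clk s > cg)"

fun op_ts :: "(real \<Rightarrow> real) \<Rightarrow> real \<times> real \<Rightarrow> ('k, 'v) cop \<Rightarrow> real" where
  "op_ts clk (dt, cg) (GetOp k t tr m) = max dt cg"
| "op_ts clk (dt, cg) (PutOp k v t s m tr) = clk s"

definition state_before :: "(real \<Rightarrow> real) \<Rightarrow> ('k, 'v) cop list \<Rightarrow> nat \<Rightarrow> real \<times> real" where
  "state_before clk ops n = foldl (exec_op clk) (0, 0) (take n ops)"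

definition correct_run :: "(real \<Rightarrow> real) \<Rightarrow> ('k, 'v) cop list \<Rightarrow> bool" where
  "correct_run clk ops \<longleftrightarrow>
     (\<forall>n < length ops. op_ok clk (state_before clk ops n) (ops ! n)) \<and>
     (\<forall>n. Suc n < length ops \<longrightarrow> return_time (ops ! n) \<le> issue_time (ops ! Suc n))"

end

theory Submission
  imports Defs
begin

lemma sb_Suc: "n < length ops \<Longrightarrow>
  state_before clk ops (Suc n) = exec_op clk (state_before clk ops n) (ops ! n)"
  by (simp add: state_before_def take_Suc_conv_app_nth)

lemma exec_snd: "snd (exec_op clk s o') \<ge> snd s"
  by (cases s; cases o') auto

lemma exec_fst: "fst (exec_op clk s o') = fst s \<or> (\<exists>k v t s' m tr. o' = PutOp k v t s' m tr \<and> fst (exec_op clk s o') = clk tr)"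
  by (cases s; cases o') auto

lemma snd_mono: "m \<le> n \<Longrightarrow> n \<le> length ops \<Longrightarrow>
  snd (state_before clk ops m) \<le> snd (state_before clk ops n)"
proof (induction n)
  case 0 then show ?case by simp
next
  case (Suc n)
  show ?case
  proof (cases "m = Suc n")
    case False
    then have "snd (state_before clk ops m) \<le> snd (state_before clk ops n)" using Suc by simp
    also have "\<dots> \<le> snd (state_before clk ops (Suc n))"
      using sb_Suc[of n ops clk] Suc.prems exec_snd by simp
    finally show ?thesis .
  qed simp
qed

lemma fst_form: "n \<le> length ops \<Longrightarrow>
  fst (state_before clk ops n) = 0 \<or> (\<exists>p<n. fst (state_before clk ops n) = clk (return_time (ops ! p)))"
proof (induction n)
  case 0 then show ?case by (simp add: state_before_def)
next
  case (Suc n)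
  have e: "state_before clk ops (Suc n) = exec_op clk (state_before clk ops n) (ops ! n)"
    using sb_Suc[of n ops clk] Suc.prems by simp
  from exec_fst[of clk "state_before clk ops n" "ops ! n"]
  show ?case
  proof
    assume "fst (exec_op clk (state_before clk ops n) (ops ! n)) = fst (state_before clk ops n)"
    then show ?thesis using Suc e by (auto intro: less_SucI)
  next
    assume "\<exists>k v t s' m tr. ops ! n = PutOp k v t s' m tr \<and> fst (exec_op clk (state_before clk ops n) (ops ! n)) = clk tr"
    then obtain k v t s' m tr where "ops ! n = PutOp k v t s' m tr" "fst (exec_op clk (state_before clk ops n) (ops ! n)) = clk tr" by blast
    then show ?thesis using e by (intro disjI2 exI[of _ n]) auto
  qed
qed

lemma issue_lt_ret: "correct_run clk ops \<Longrightarrow> n < length ops \<Longrightarrow> issue_time (ops ! n) < return_time (ops ! n)"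
proof -
  assume a: "correct_run clk ops" "n < length ops"
  then have ok: "op_ok clk (state_before clk ops n) (ops ! n)" by (simp add: correct_run_def)
  obtain d c where "state_before clk ops n = (d, c)" by fastforce
  with ok show ?thesis by (cases "ops ! n") auto
qed

lemma ret_le_issue: "correct_run clk ops \<Longrightarrow> q < length ops \<Longrightarrow> p < q \<Longrightarrow>
  return_time (ops ! p) \<le> issue_time (ops ! q)"
proof (induction q)
  case 0 then show ?case by simp
next
  case (Suc q)
  have r: "return_time (ops ! q) \<le> issue_time (ops ! Suc q)"
    using Suc.prems by (simp add: correct_run_def)
  show ?case
  proof (cases "p = q")
    case False
    then have "return_time (ops ! p) \<le> issue_time (ops ! q)" using Suc by simp
    also have "\<dots> < return_time (ops ! q)" using issue_lt_ret[of clk ops q] Suc.prems by simp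
    finally show ?thesis using r by simp
  qed (use r in simp)
qed

theorem lemma4:
  fixes clk :: "real \<Rightarrow> real" and ops :: "('k, 'v) cop list" and i j :: nat
  assumes "strict_mono clk"
    and "\<forall>t. 0 < clk t"
    and "correct_run clk ops"
    and "i < j" and "j < length ops"
    and "is_get (ops ! i)" and "is_put (ops ! j)"
  shows "op_ts clk (state_before clk ops j) (ops ! j) > op_ts clk (state_before clk ops i) (ops ! i)"
proof -
  obtain k v t s m tr where oj: "ops ! j = PutOp k v t s m tr"
    using assms(7) by (cases "ops ! j") auto
  obtain k' t' tr' m' where oi: "ops ! i = GetOp k' t' tr' m'"
    using assms(6) by (cases "ops ! i") auto
  obtain dj cj where sj: "state_before clk ops j = (dj, cj)" by fastforce
  obtain di ci where si: "state_before clk ops i = (di, ci)" by fastforce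
  have okj: "op_ok clk (state_before clk ops j) (ops ! j)" using assms by (simp add: correct_run_def)
  then have ts: "t \<le> s" "clk s > cj" using oj sj by auto
  have "ci \<le> cj" using snd_mono[of i j ops clk] assms si sj by simp
  have ij: "return_time (ops ! i) \<le> issue_time (ops ! j)" using ret_le_issue[of clk ops j i] assms by simp
  have "di < clk s"
  proof -
    from fst_form[of i ops clk] assms si
    have "di = 0 \<or> (\<exists>p<i. di = clk (return_time (ops ! p)))" by simp
    then show ?thesis
    proof
      assume "di = 0" then show ?thesis using assms(2) by simp
    next
      assume "\<exists>p<i. di = clk (return_time (ops ! p))"
      then obtain p where p: "p < i" "di = clk (return_time (ops ! p))" by blast
      have "return_time (ops ! p) \<le> issue_time (ops ! i)" using ret_le_issue[of clk ops i p] assms p by simp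
      also have "\<dots> < return_time (ops ! i)" using issue_lt_ret[of clk ops i] assms by simp
      also have "\<dots> \<le> s" using ij oj ts by simp
      finally show ?thesis using p assms(1) by (simp add: strict_mono_less)
    qed
  qed
  then show ?thesis using oi oj si sj ts \<open>ci \<le> cj\<close> by simp
qed

end
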